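(* Let $\mathcal{Q}\subset\mathcal{E}$ be a smooth embedded submanifold with projection function $\Pi$ for $T\mathcal{Q}$, and suppose $T\mathcal{Q}=\mathcal{H}\oplus\mathcal{V}$, $T^*\mathcal{Q}=\mathcal{H}^*\oplus\mathcal{V}^*$ with $\Pi=\mathsf{H}+\mathsf{V}$ as described in the context. Assume $\mathcal{V}$ is integrable (the Lie bracket of two vertical vector fields is vertical). For $(q,p_h)\in\mathcal{H}^*$ define $$\mathsf{B}(q,p_h)\epsilon=-\mathsf{H}(q)^{T}\{X\mapsto\mathsf{V}'(q;X)^{T}p_h\}^{T}\epsilon+\mathsf{H}'(q;\epsilon)^{T}p_h,$$ $$\mathcal{V}_{(q,p_h)}\mathcal{H}^*=\{(\epsilon,\mathsf{B}(q,p_h)\epsilon):\epsilon\in\mathcal{V}_q\},\quad \mathcal{H}_{(q,p_h)}\mathcal{H}^*=\{(\delta_q,\delta_p):\delta_q\in\mathcal{H}_q,\ \delta_p=\mathsf{H}(q)^{T}\delta_p+\mathsf{H}'(q;\delta_q)^{T}p_h\}.$$ Then $T_{(q,p_h)}\mathcal{H}^*=\mathcal{V}_{(q,p_h)}\mathcal{H}^*\oplus\mathcal{H}_{(q,p_h)}\mathcal{H}^*$, $\Omega(\mathcal{V}_{(q,p_h)}\mathcal{H}^*,T_{(q,p_h)}\mathcal{H}^* )=0$, $\mathcal{V}_{(q,p_h)}\mathcal{H}^*$ is exactly the kernel of $\Omega$ restricted to $T_{(q,p_h)}\mathcal{H}^*$, $\Omega$ restricted to $\mathcal{H}_{(q,p_h)}\mathcal{H}^*$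 is nondegenerate, and the map $\epsilon\mapsto(\epsilon,\mathsf{B}(q,p_h)\epsilon)$ is a bijection from $\mathcal{V}_q$ onto $\mathcal{V}_{(q,p_h)}\mathcal{H}^*$.
   Context: $\mathcal{E}$ is a finite-dimensional real inner product space (inner product $a\cdot b$, adjoint $A^{T}$); $\Pi:\mathcal{Q}\to\mathrm{Lin}(\mathcal{E},\mathcal{E})$ is smooth with $\Pi(q)$ idempotent with image $T_q\mathcal{Q}$, and $T^*_q\mathcal{Q}=\mathrm{Im}\,\Pi(q)^{T}$. Splitting: $\mathsf{H},\mathsf{V}:\mathcal{Q}\to\mathrm{Lin}(\mathcal{E},\mathcal{E})$ are smooth with $\mathsf{H}(q),\mathsf{V}(q)$ idempotent, $\mathsf{H}+\mathsf{V}=\Pi$, $\mathsf{H}\mathsf{V}=\mathsf{V}\mathsf{H}=0$, $\mathcal{H}_q=\mathrm{Im}\,\mathsf{H}(q)$, $\mathcal{V}_q=\mathrm{Im}\,\mathsf{V}(q)$, $\mathcal{H}^*_q=\mathrm{Im}\,\mathsf{H}(q)^{T}$, $\mathcal{V}^*_q=\mathrm{Im}\,\mathsf{V}(q)^{T}$. $\mathcal{H}^*=\{(q,p_h):p_h\in\mathcal{H}^*_q\}\subset\mathcal{E}^2$, with $T_{(q,p_h)}\mathcal{H}^*=\{(\Delta_q,\Delta_p):\Delta_q\in T_q\mathcal{Q},\ \Delta_p=\mathsf{H}(q)^{T}\Delta_p+\mathsf{H}'(q;\Delta_q)^{T}p_h\}$. $\Omega((a,b),(c,d))=a\cdot d-b\cdot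 c$. Primes denote directional derivatives. $\{X\mapsto\Psi'(q;X)e_1\}^{T}e_2$ denotes the unique $\Phi\in T_q\mathcal{Q}$ with $\Delta\cdot\Phi=e_2\cdot\Psi'(q;\Delta)e_1$ for all $\Delta\in T_q\mathcal{Q}$. *)

theory Defs
  imports "HOL-Analysis.Analysis"
begin

fun iter_dd :: "'a::real_normed_vector list \<Rightarrow> ('a \<Rightarrow> 'b::real_normed_vector) \<Rightarrow> 'a \<Rightarrow> 'b" where
  "iter_dd [] f = f"
| "iter_dd (v # vs) f = (\<lambda>x. frechet_derivative (iter_dd vs f) (at x) v)"

text \<open>f is smooth on the open set S: all iterated derivatives exist (Frechet) on S.
  For finite-dimensional domains this is exactly C-infinity.\<close>
definition smooth_on :: "'a::real_normed_vector set \<Rightarrow> ('a \<Rightarrow> 'b::real_normed_vector) \<Rightarrow> bool" where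
  "smooth_on S f \<longleftrightarrow> open S \<and> (\<forall>vs. \<forall>x\<in>S. iter_dd vs f differentiable (at x))"

definition embedded_submanifold :: "'e::euclidean_space set \<Rightarrow> bool" where
  "embedded_submanifold Q \<longleftrightarrow>
     (\<forall>q\<in>Q. \<exists>U W (\<phi>::'e \<Rightarrow> 'e) \<psi> L.
        open U \<and> q \<in> U \<and> open W \<and> smooth_on U \<phi> \<and> smooth_on W \<psi> \<and>
        \<phi> ` U = W \<and> (\<forall>x\<in>U. \<psi> (\<phi> x) = x) \<and> (\<forall>y\<in>W. \<phi> (\<psi> y) = y) \<and>
        subspace L \<and> \<phi> ` (Q \<inter> U) = W \<inter> L)"

definition tangent_space :: "'e::euclidean_space set \<Rightarrow> 'e \<Rightarrow> 'e set" where
  "tangent_space Q q = {v. \<exists>\<gamma>::real \<Rightarrow> 'e. (\<forall>t. \<gamma> t \<in> Q) \<and> \<gamma> 0 = q \<and>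
                                 (\<gamma> has_vector_derivative v) (at 0)}"

definition transp :: "('e::euclidean_space \<Rightarrow>\<^sub>L 'e) \<Rightarrow> 'e \<Rightarrow> 'e" where
  "transp A = adjoint (blinfun_apply A)"

definition dder :: "('e::euclidean_space \<Rightarrow> ('e \<Rightarrow>\<^sub>L 'e)) \<Rightarrow> 'e \<Rightarrow> 'e \<Rightarrow> ('e \<Rightarrow>\<^sub>L 'e)" where
  "dder F q X = frechet_derivative F (at q) X"

definition Omega :: "('e::euclidean_space \<times> 'e) \<Rightarrow> ('e \<times> 'e) \<Rightarrow> real" where
  "Omega z w = fst z \<bullet> snd w - snd z \<bullet> fst w"

text \<open>{X \<mapsto> Psi'(q;X) e1}^T e2 : the unique Phi in T_qQ with
  Delta . Phi = e2 . Psi'(q;Delta) e1 for all Delta in T_qQ.  Here the argument f is the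
  map Delta \<mapsto> Psi'(q;Delta) e1.\<close>
definition dtransp :: "'e::euclidean_space set \<Rightarrow> 'e \<Rightarrow> ('e \<Rightarrow> 'e) \<Rightarrow> 'e \<Rightarrow> 'e" where
  "dtransp Q q f e2 =
     (THE \<Phi>. \<Phi> \<in> tangent_space Q q \<and> (\<forall>\<Delta>\<in>tangent_space Q q. \<Delta> \<bullet> \<Phi> = e2 \<bullet> f \<Delta>))"

text \<open>A smooth vector field on Q, given by a smooth extension to an open neighbourhood of Q.\<close>
definition smooth_vector_field :: "'e::euclidean_space set \<Rightarrow> ('e \<Rightarrow> 'e) \<Rightarrow> bool" where
  "smooth_vector_field Q X \<longleftrightarrow> (\<exists>U. Q \<subseteq> U \<and> smooth_on U X) \<and> (\<forall>q\<in>Q. X q \<in> tangent_space Q q)"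

definition lie_bracket :: "('e::euclidean_space \<Rightarrow> 'e) \<Rightarrow> ('e \<Rightarrow> 'e) \<Rightarrow> 'e \<Rightarrow> 'e" where
  "lie_bracket X Y q = frechet_derivative Y (at q) (X q) - frechet_derivative X (at q) (Y q)"

definition integrable_distribution :: "'e::euclidean_space set \<Rightarrow> ('e \<Rightarrow> ('e \<Rightarrow>\<^sub>L 'e)) \<Rightarrow> bool" where
  "integrable_distribution Q V \<longleftrightarrow>
     (\<forall>X Y. smooth_vector_field Q X \<and> smooth_vector_field Q Y \<and>
            (\<forall>q\<in>Q. X q \<in> range (blinfun_apply (V q)) \<and> Y q \<in> range (blinfun_apply (V q))) \<longrightarrow>
            (\<forall>q\<in>Q. lie_bracket X Y q \<in> range (blinfun_apply (V q))))"

definition Bmap :: "'e::euclidean_space set \<Rightarrow> ('e \<Rightarrow> ('e \<Rightarrow>\<^sub>L 'e)) \<Rightarrow> ('e \<Rightarrow> ('e \<Rightarrow>\<^sub>L 'e))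
                    \<Rightarrow> 'e \<Rightarrow> 'e \<Rightarrow> 'e \<Rightarrow> 'e" where
  "Bmap Q H V q ph \<epsilon> =
     - transp (H q) (dtransp Q q (\<lambda>X. transp (dder V q X) ph) \<epsilon>) + transp (dder H q \<epsilon>) ph"

definition tangent_Hstar :: "'e::euclidean_space set \<Rightarrow> ('e \<Rightarrow> ('e \<Rightarrow>\<^sub>L 'e)) \<Rightarrow> 'e \<Rightarrow> 'e \<Rightarrow> ('e \<times> 'e) set" where
  "tangent_Hstar Q H q ph = {(dq, dp). dq \<in> tangent_space Q q \<and>
        dp = transp (H q) dp + transp (dder H q dq) ph}"

definition vert_Hstar :: "'e::euclidean_space set \<Rightarrow> ('e \<Rightarrow> ('e \<Rightarrow>\<^sub>L 'e)) \<Rightarrow> ('e \<Rightarrow> ('e \<Rightarrow>\<^sub>L 'e))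
                    \<Rightarrow> 'e \<Rightarrow> 'e \<Rightarrow> ('e \<times> 'e) set" where
  "vert_Hstar Q H V q ph = {(\<epsilon>, Bmap Q H V q ph \<epsilon>) | \<epsilon>. \<epsilon> \<in> range (blinfun_apply (V q))}"

definition horiz_Hstar :: "('e::euclidean_space \<Rightarrow> ('e \<Rightarrow>\<^sub>L 'e)) \<Rightarrow> 'e \<Rightarrow> 'e \<Rightarrow> ('e \<times> 'e) set" where
  "horiz_Hstar H q ph = {(dq, dp). dq \<in> range (blinfun_apply (H q)) \<and>
        dp = transp (H q) dp + transp (dder H q dq) ph}"

end

theory Submission
  imports Defs
begin


lemma curve_prod:
  fixes F G K :: "'e::euclidean_space \<Rightarrow> ('e \<Rightarrow>\<^sub>L 'e)" and \<gamma> :: "real \<Rightarrow> 'e"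
  assumes dF: "(F has_derivative dF) (at q)" and dG: "(G has_derivative dG) (at q)"
    and dK: "(K has_derivative dK) (at q)" and g0: "\<gamma> 0 = q"
    and gd: "(\<gamma> has_vector_derivative x) (at 0)"
    and eq: "\<forall>t. F (\<gamma> t) o\<^sub>L G (\<gamma> t) = K (\<gamma> t)"
  shows "(F q o\<^sub>L dG x) + (dF x o\<^sub>L G q) = dK x"
proof -
  have g: "(\<gamma> has_derivative (\<lambda>s. s *\<^sub>R x)) (at 0)" using gd by (simp add: has_vector_derivative_def)
  have f1: "((\<lambda>t. F (\<gamma> t)) has_derivative (\<lambda>s. dF (s *\<^sub>R x))) (at 0)"
    by (rule has_derivative_compose[OF g]) (simp add: g0 dF)
  have f2: "((\<lambda>t. G (\<gamma> t)) has_derivative (\<lambda>s. dG (s *\<^sub>R x))) (at 0)"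
    by (rule has_derivative_compose[OF g]) (simp add: g0 dG)
  have f3: "((\<lambda>t. K (\<gamma> t)) has_derivative (\<lambda>s. dK (s *\<^sub>R x))) (at 0)"
    by (rule has_derivative_compose[OF g]) (simp add: g0 dK)
  have f4: "((\<lambda>t. F (\<gamma> t) o\<^sub>L G (\<gamma> t)) has_derivative
     (\<lambda>s. (F (\<gamma> 0) o\<^sub>L dG (s *\<^sub>R x)) + (dF (s *\<^sub>R x) o\<^sub>L G (\<gamma> 0)))) (at 0)"
    using bounded_bilinear.FDERIV[OF bounded_bilinear_blinfun_compose f1 f2] by simp
  then have "((\<lambda>t. K (\<gamma> t)) has_derivative
     (\<lambda>s. (F (\<gamma> 0) o\<^sub>L dG (s *\<^sub>R x)) + (dF (s *\<^sub>R x) o\<^sub>L G (\<gamma> 0)))) (at 0)"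
    using eq by simp
  from has_derivative_unique[OF this f3]
  have "(\<lambda>s. (F (\<gamma> 0) o\<^sub>L dG (s *\<^sub>R x)) + (dF (s *\<^sub>R x) o\<^sub>L G (\<gamma> 0))) 1 = (\<lambda>s. dK (s *\<^sub>R x)) 1"
    by (metis)
  then show ?thesis using g0 by simp
qed

lemma field_deriv:
  fixes V :: "'e::euclidean_space \<Rightarrow> ('e \<Rightarrow>\<^sub>L 'e)"
  assumes "(V has_derivative dV) (at x)"
  shows "((\<lambda>y. blinfun_apply (V y) b) has_derivative (\<lambda>d. blinfun_apply (dV d) b)) (at x)"
  using bounded_bilinear.FDERIV[OF bounded_bilinear_blinfun_apply assms has_derivative_const[of b]]
  by simp

lemma smooth_field:
  fixes V :: "'e::euclidean_space \<Rightarrow> ('e \<Rightarrow>\<^sub>L 'e)"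
  assumes "smooth_on U V"
  shows "smooth_on U (\<lambda>y. blinfun_apply (V y) b)"
proof -
  have oU: "open U" and dif: "\<And>vs x. x \<in> U \<Longrightarrow> iter_dd vs V differentiable (at x)"
    using assms unfolding smooth_on_def by auto
  have main: "\<forall>x\<in>U. iter_dd vs (\<lambda>y. blinfun_apply (V y) b) x = blinfun_apply (iter_dd vs V x) b
     \<and> ((iter_dd vs (\<lambda>y. blinfun_apply (V y) b)) has_derivative
          (\<lambda>d. blinfun_apply (frechet_derivative (iter_dd vs V) (at x) d) b)) (at x)" for vs
  proof (induction vs)
    case Nil
    show ?case
    proof
      fix x assume x: "x \<in> U"
      show "iter_dd [] (\<lambda>y. blinfun_apply (V y) b) x = blinfun_apply (iter_dd [] V x) b
     \<and> ((iter_dd [] (\<lambda>y. blinfun_apply (V y) b)) has_derivative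
          (\<lambda>d. blinfun_apply (frechet_derivative (iter_dd [] V) (at x) d) b)) (at x)"
        using field_deriv[OF dif[OF x, of "[]", unfolded frechet_derivative_works]] by simp
    qed
  next
    case (Cons w vs)
    show ?case
    proof
      fix x assume x: "x \<in> U"
      have e1: "iter_dd (w # vs) (\<lambda>y. blinfun_apply (V y) b) x = blinfun_apply (iter_dd (w#vs) V x) b"
      proof -
        have "frechet_derivative (iter_dd vs (\<lambda>y. blinfun_apply (V y) b)) (at x) =
           (\<lambda>d. blinfun_apply (frechet_derivative (iter_dd vs V) (at x) d) b)"
          using Cons x frechet_derivative_at by metis
        then show ?thesis by simp
      qed
      have d: "((iter_dd (w # vs) V) has_derivative frechet_derivative (iter_dd (w#vs) V) (at x)) (at x)"
        using dif[OF x] frechet_derivative_works by blast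
      have "((\<lambda>y. blinfun_apply (iter_dd (w#vs) V y) b) has_derivative
          (\<lambda>d. blinfun_apply (frechet_derivative (iter_dd (w#vs) V) (at x) d) b)) (at x)"
        by (rule field_deriv[OF d])
      moreover have "\<And>y. y \<in> U \<Longrightarrow> blinfun_apply (iter_dd (w#vs) V y) b = iter_dd (w # vs) (\<lambda>y. blinfun_apply (V y) b) y"
      proof -
        fix y assume y: "y \<in> U"
        have "frechet_derivative (iter_dd vs (\<lambda>y. blinfun_apply (V y) b)) (at y) =
           (\<lambda>d. blinfun_apply (frechet_derivative (iter_dd vs V) (at y) d) b)"
          using Cons y frechet_derivative_at by metis
        then show "blinfun_apply (iter_dd (w#vs) V y) b = iter_dd (w # vs) (\<lambda>y. blinfun_apply (V y) b) y" by simp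
      qed
      ultimately have "((iter_dd (w # vs) (\<lambda>y. blinfun_apply (V y) b)) has_derivative
          (\<lambda>d. blinfun_apply (frechet_derivative (iter_dd (w#vs) V) (at x) d) b)) (at x)"
        using has_derivative_transform_within_open[OF _ oU x] by blast
      with e1 show "iter_dd (w # vs) (\<lambda>y. blinfun_apply (V y) b) x = blinfun_apply (iter_dd (w#vs) V x) b
     \<and> ((iter_dd (w # vs) (\<lambda>y. blinfun_apply (V y) b)) has_derivative
          (\<lambda>d. blinfun_apply (frechet_derivative (iter_dd (w#vs) V) (at x) d) b)) (at x)" by blast
    qed
  qed
  show ?thesis unfolding smooth_on_def using oU main differentiable_def by blast
qed
lemma tr1: "u \<bullet> transp A w = blinfun_apply A u \<bullet> w"
  unfolding transp_def by (rule adjoint_works) (simp add: blinfun.bounded_linear_right bounded_linear.linear)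
lemma tr2: "transp A w \<bullet> u = w \<bullet> blinfun_apply A u"
  using tr1[of u A w] by (simp add: inner_commute)
lemma vec_eqI: "(\<And>u. u \<bullet> x = u \<bullet> (y::'a::real_inner)) \<Longrightarrow> x = y" using vector_eq_ldot by blast

lemma riesz_sub:
  fixes T :: "'e::euclidean_space set"
  assumes T: "subspace T" and g: "linear g"
  shows "\<exists>!\<Phi>. \<Phi> \<in> T \<and> (\<forall>\<Delta>\<in>T. \<Delta> \<bullet> \<Phi> = g \<Delta>)"
proof -
  define r where "r = adjoint g (1::real)"
  have r: "\<Delta> \<bullet> r = g \<Delta>" for \<Delta> unfolding r_def using adjoint_works[OF g] by simp
  obtain y z where y: "y \<in> span T" and z: "\<And>w. w \<in> span T \<Longrightarrow> orthogonal z w" and rz: "r = y + z"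
    using orthogonal_subspace_decomp_exists by blast
  have yT: "y \<in> T" using y T by (metis span_eq_iff)
  have yP: "\<forall>\<Delta>\<in>T. \<Delta> \<bullet> y = g \<Delta>"
  proof
    fix \<Delta> assume d: "\<Delta> \<in> T"
    then have "z \<bullet> \<Delta> = 0" using z span_base orthogonal_def by blast
    then show "\<Delta> \<bullet> y = g \<Delta>" using r[of \<Delta>] rz by (simp add: inner_add_right inner_commute)
  qed
  show ?thesis
  proof (rule ex1I[where a=y])
    show "y \<in> T \<and> (\<forall>\<Delta>\<in>T. \<Delta> \<bullet> y = g \<Delta>)" using yT yP by blast
    fix \<Phi> assume P: "\<Phi> \<in> T \<and> (\<forall>\<Delta>\<in>T. \<Delta> \<bullet> \<Phi> = g \<Delta>)"
    have dT: "\<Phi> - y \<in> T" using P yT T subspace_diff by blast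
    have "(\<Phi> - y) \<bullet> (\<Phi> - y) = 0"
      using P yP dT by (simp add: inner_diff_right)
    then show "\<Phi> = y" by simp
  qed
qed


lemma tr_add: "transp A (a + b) = transp A a + transp A b" by (rule vec_eqI) (simp add: tr1 inner_add)
lemma tr_diff: "transp A (a - b) = transp A a - transp A b" by (rule vec_eqI) (simp add: tr1 inner_diff)
lemma tr_neg: "transp A (- a) = - transp A a" by (rule vec_eqI) (simp add: tr1)
lemma tr_scale: "transp A (c *\<^sub>R a) = c *\<^sub>R transp A a" by (rule vec_eqI) (simp add: tr1)
lemma tr_zero: "transp A 0 = 0" by (rule vec_eqI) (simp add: tr1)
lemma tr_addA: "transp (A + B) w = transp A w + transp B w" by (rule vec_eqI) (simp add: tr1 inner_add blinfun.add_left)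
lemma tr_scaleA: "transp (c *\<^sub>R A) w = c *\<^sub>R transp A w" by (rule vec_eqI) (simp add: tr1 blinfun.scaleR_left)
lemma tr_zeroA: "transp 0 w = 0" by (rule vec_eqI) (simp add: tr1)
lemma Omega_add: "Omega (x + y) b = Omega x b + Omega y b"
  by (simp add: Omega_def inner_add_left)

theorem mainTheorem10:
  fixes Q :: "'e::euclidean_space set"
    and U :: "'e set"
    and Pi H V :: "'e \<Rightarrow> ('e \<Rightarrow>\<^sub>L 'e)"
    and q ph :: 'e
  assumes subm: "embedded_submanifold Q"
    and nbhd: "Q \<subseteq> U"
    and smooth_Pi: "smooth_on U Pi" and smooth_H: "smooth_on U H" and smooth_V: "smooth_on U V"
    and Pi_idem: "\<forall>x\<in>Q. Pi x o\<^sub>L Pi x = Pi x"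
    and Pi_image: "\<forall>x\<in>Q. range (blinfun_apply (Pi x)) = tangent_space Q x"
    and H_idem: "\<forall>x\<in>Q. H x o\<^sub>L H x = H x"
    and V_idem: "\<forall>x\<in>Q. V x o\<^sub>L V x = V x"
    and split: "\<forall>x\<in>Q. H x + V x = Pi x"
    and HV: "\<forall>x\<in>Q. H x o\<^sub>L V x = 0"
    and VH: "\<forall>x\<in>Q. V x o\<^sub>L H x = 0"
    and integrable: "integrable_distribution Q V"
    and q: "q \<in> Q"
    and ph: "ph \<in> range (transp (H q))"
  shows "subspace (vert_Hstar Q H V q ph) \<and> subspace (horiz_Hstar H q ph)
       \<and> vert_Hstar Q H V q ph \<subseteq> tangent_Hstar Q H q ph
       \<and> horiz_Hstar H q ph \<subseteq> tangent_Hstar Q H q ph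
       \<and> (\<forall>z\<in>tangent_Hstar Q H q ph. \<exists>!ab. fst ab \<in> vert_Hstar Q H V q ph
              \<and> snd ab \<in> horiz_Hstar H q ph \<and> z = fst ab + snd ab)
       \<and> (\<forall>a\<in>vert_Hstar Q H V q ph. \<forall>b\<in>tangent_Hstar Q H q ph. Omega a b = 0)
       \<and> vert_Hstar Q H V q ph =
           {a\<in>tangent_Hstar Q H q ph. \<forall>b\<in>tangent_Hstar Q H q ph. Omega a b = 0}
       \<and> (\<forall>a\<in>horiz_Hstar H q ph. (\<forall>b\<in>horiz_Hstar H q ph. Omega a b = 0) \<longrightarrow> a = 0)
       \<and> bij_betw (\<lambda>\<epsilon>. (\<epsilon>, Bmap Q H V q ph \<epsilon>)) (range (blinfun_apply (V q))) (vert_Hstar Q H V q ph)"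
  proof -
  have qU: "q \<in> U" using q nbhd by blast
  have dHh: "(H has_derivative dder H q) (at q)"
    using smooth_H qU unfolding smooth_on_def dder_def
    by (metis frechet_derivative_works iter_dd.simps(1))
  have dVh: "(V has_derivative dder V q) (at q)"
    using smooth_V qU unfolding smooth_on_def dder_def
    by (metis frechet_derivative_works iter_dd.simps(1))
  have linH: "linear (dder H q)" using dHh has_derivative_linear by blast
  have linV: "linear (dder V q)" using dVh has_derivative_linear by blast
  have dHadd: "\<And>a b. dder H q (a + b) = dder H q a + dder H q b" using linH by (simp add: linear_add)
  have dHscale: "\<And>c a. dder H q (c *\<^sub>R a) = c *\<^sub>R dder H q a" using linH by (simp add: linear_scale)
  have dH0: "dder H q 0 = 0" using linH by (simp add: linear_0)
  have dVadd: "\<And>a b. dder V q (a + b) = dder V q a + dder V q b" using linV by (simp add: linear_add)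
  have dVscale: "\<And>c a. dder V q (c *\<^sub>R a) = c *\<^sub>R dder V q a" using linV by (simp add: linear_scale)
  have hh: "\<And>x u. x \<in> Q \<Longrightarrow> H x (H x u) = H x u"
    using H_idem by (metis blinfun_apply_blinfun_compose)
  have vv: "\<And>x u. x \<in> Q \<Longrightarrow> V x (V x u) = V x u"
    using V_idem by (metis blinfun_apply_blinfun_compose)
  have hv: "\<And>x u. x \<in> Q \<Longrightarrow> H x (V x u) = 0"
    using HV by (metis blinfun_apply_blinfun_compose zero_blinfun.rep_eq)
  have vh: "\<And>x u. x \<in> Q \<Longrightarrow> V x (H x u) = 0"
    using VH by (metis blinfun_apply_blinfun_compose zero_blinfun.rep_eq)
  have pe: "\<And>x u. x \<in> Q \<Longrightarrow> Pi x u = H x u + V x u"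
    using split by (metis plus_blinfun.rep_eq)
  have pp: "\<And>u. Pi q (Pi q u) = Pi q u"
    using Pi_idem q by (metis blinfun_apply_blinfun_compose)
  have T: "tangent_space Q q = range (Pi q)" using Pi_image q by simp
  have subT: "subspace (tangent_space Q q)"
    unfolding T by (rule linear_subspace_image) (simp_all add: blinfun.bounded_linear_right bounded_linear.linear)
  have hT: "\<And>u. H q u \<in> tangent_space Q q"
  proof -
    fix u have "Pi q (H q u) = H q u" using pe[OF q] hh[OF q] vh[OF q] by simp
    then show "H q u \<in> tangent_space Q q" unfolding T by (metis rangeI)
  qed
  have vT: "\<And>u. V q u \<in> tangent_space Q q"
  proof -
    fix u have "Pi q (V q u) = V q u" using pe[OF q] vv[OF q] hv[OF q] by simp
    then show "V q u \<in> tangent_space Q q" unfolding T by (metis rangeI)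
  qed
  have Tdec: "\<And>x. x \<in> tangent_space Q q \<Longrightarrow> x = H q x + V q x"
    unfolding T using pp pe[OF q] by auto
  have F2: "\<And>x u. x \<in> tangent_space Q q \<Longrightarrow> dder H q x (H q u) + H q (dder H q x u) = dder H q x u"
  proof -
    fix x u assume x: "x \<in> tangent_space Q q"
    obtain \<gamma> where g1: "\<forall>t. \<gamma> t \<in> Q" and g2: "\<gamma> 0 = q" and g3: "(\<gamma> has_vector_derivative x) (at 0)"
      using x unfolding tangent_space_def by blast
    have "\<forall>t. H (\<gamma> t) o\<^sub>L H (\<gamma> t) = H (\<gamma> t)" using g1 H_idem by blast
    from curve_prod[OF dHh dHh dHh g2 g3 this]
    have E: "(H q o\<^sub>L dder H q x) + (dder H q x o\<^sub>L H q) = dder H q x" .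
    have "blinfun_apply ((H q o\<^sub>L dder H q x) + (dder H q x o\<^sub>L H q)) u = dder H q x u" by (simp only: E)
    then show "dder H q x (H q u) + H q (dder H q x u) = dder H q x u"
      by (simp add: blinfun.add_left add.commute)
  qed
  have F3: "\<And>x u. x \<in> tangent_space Q q \<Longrightarrow> dder H q x (V q u) + H q (dder V q x u) = 0"
  proof -
    fix x u assume x: "x \<in> tangent_space Q q"
    obtain \<gamma> where g1: "\<forall>t. \<gamma> t \<in> Q" and g2: "\<gamma> 0 = q" and g3: "(\<gamma> has_vector_derivative x) (at 0)"
      using x unfolding tangent_space_def by blast
    have "\<forall>t. H (\<gamma> t) o\<^sub>L V (\<gamma> t) = (\<lambda>_. 0) (\<gamma> t)" using g1 HV by simp
    from curve_prod[OF dHh dVh has_derivative_const g2 g3 this]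
    have E: "(H q o\<^sub>L dder V q x) + (dder H q x o\<^sub>L V q) = 0" .
    have "blinfun_apply ((H q o\<^sub>L dder V q x) + (dder H q x o\<^sub>L V q)) u = blinfun_apply 0 u" by (simp only: E)
    then show "dder H q x (V q u) + H q (dder V q x u) = 0"
      by (simp add: blinfun.add_left add.commute)
  qed
  have F4: "\<And>a b. a \<in> range (V q) \<Longrightarrow> b \<in> range (V q) \<Longrightarrow> H q (dder H q a b) = H q (dder H q b a)"
  proof -
    fix a b assume a: "a \<in> range (V q)" and b: "b \<in> range (V q)"
    define X where "X = (\<lambda>y. blinfun_apply (V y) a)"
    define Y where "Y = (\<lambda>y. blinfun_apply (V y) b)"
    have vfX: "smooth_vector_field Q X"
      unfolding smooth_vector_field_def
    proof
      show "\<exists>U. Q \<subseteq> U \<and> smooth_on U X" using nbhd smooth_field[OF smooth_V] unfolding X_def by blast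
      show "\<forall>x\<in>Q. X x \<in> tangent_space Q x"
      proof
        fix x assume x: "x \<in> Q"
        have "Pi x (V x a) = V x a" using pe[OF x] vv[OF x] hv[OF x] by simp
        then show "X x \<in> tangent_space Q x" unfolding X_def using Pi_image x by (metis rangeI)
      qed
    qed
    have vfY: "smooth_vector_field Q Y"
      unfolding smooth_vector_field_def
    proof
      show "\<exists>U. Q \<subseteq> U \<and> smooth_on U Y" using nbhd smooth_field[OF smooth_V] unfolding Y_def by blast
      show "\<forall>x\<in>Q. Y x \<in> tangent_space Q x"
      proof
        fix x assume x: "x \<in> Q"
        have "Pi x (V x b) = V x b" using pe[OF x] vv[OF x] hv[OF x] by simp
        then show "Y x \<in> tangent_space Q x" unfolding Y_def using Pi_image x by (metis rangeI)
      qed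
    qed
    have "\<forall>x\<in>Q. X x \<in> range (blinfun_apply (V x)) \<and> Y x \<in> range (blinfun_apply (V x))"
      unfolding X_def Y_def by blast
    then have LB: "lie_bracket X Y q \<in> range (blinfun_apply (V q))"
      using integrable vfX vfY q unfolding integrable_distribution_def by blast
    have Xq: "X q = a" using a vv[OF q] unfolding X_def by auto
    have Yq: "Y q = b" using b vv[OF q] unfolding Y_def by auto
    have fX: "frechet_derivative X (at q) = (\<lambda>d. dder V q d a)"
      unfolding X_def using field_deriv[OF dVh] frechet_derivative_at by metis
    have fY: "frechet_derivative Y (at q) = (\<lambda>d. dder V q d b)"
      unfolding Y_def using field_deriv[OF dVh] frechet_derivative_at by metis
    have "lie_bracket X Y q = dder V q a b - dder V q b a"
      unfolding lie_bracket_def fX fY Xq Yq ..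
    with LB obtain w where w: "dder V q a b - dder V q b a = V q w" by auto
    have "H q (dder V q a b) - H q (dder V q b a) = 0"
      using w hv[OF q] by (metis blinfun.diff_right)
    moreover have "H q (dder V q a b) = - dder H q a b"
      using F3[of a b] vT a b vv[OF q] by (metis add_eq_0_iff rangeE)
    moreover have "H q (dder V q b a) = - dder H q b a"
      using F3[of b a] vT a b vv[OF q] by (metis add_eq_0_iff rangeE)
    ultimately have "H q (dder H q a b - dder H q b a) = 0"
      by (simp add: blinfun.diff_right)
    then show "H q (dder H q a b) = H q (dder H q b a)"
      by (simp add: blinfun.diff_right)
  qed
  obtain w0 where w0: "ph = transp (H q) w0" using ph by blast
  have Ph: "\<And>u. ph \<bullet> H q u = ph \<bullet> u"
    using w0 hh[OF q] by (simp add: tr2)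
  have K1: "\<And>x. x \<in> tangent_space Q q \<Longrightarrow> transp (H q) (transp (dder H q x) ph) = 0"
  proof -
    fix x assume x: "x \<in> tangent_space Q q"
    show "transp (H q) (transp (dder H q x) ph) = 0"
    proof (rule vec_eqI)
      fix u
      have "u \<bullet> transp (H q) (transp (dder H q x) ph) = dder H q x (H q u) \<bullet> ph"
        by (simp add: tr1)
      also have "\<dots> = (dder H q x u - H q (dder H q x u)) \<bullet> ph"
        using F2[OF x, of u] by (metis add_diff_cancel_right')
      also have "\<dots> = ph \<bullet> (dder H q x u - H q (dder H q x u))" by (rule inner_commute)
      also have "\<dots> = 0" using Ph[of "dder H q x u"] by (simp add: inner_diff_right)
      finally show "u \<bullet> transp (H q) (transp (dder H q x) ph) = u \<bullet> 0" by simp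
    qed
  qed
  have THH: "\<And>w. transp (H q) (transp (H q) w) = transp (H q) w"
    by (rule vec_eqI) (simp add: tr1 hh[OF q])
  define Phi where "Phi = dtransp Q q (\<lambda>X. transp (dder V q X) ph)"
  have glin: "linear (\<lambda>\<Delta>. dder V q \<Delta> e \<bullet> ph)" for e
    by (rule linearI) (simp_all add: dVadd dVscale blinfun.add_left blinfun.scaleR_left inner_add_left)
  have PhiEx: "\<exists>!\<Phi>. \<Phi> \<in> tangent_space Q q \<and> (\<forall>\<Delta>\<in>tangent_space Q q. \<Delta> \<bullet> \<Phi> = e \<bullet> transp (dder V q \<Delta>) ph)" for e
    using riesz_sub[OF subT glin[of e]] by (simp add: tr1)
  have PhiP: "Phi e \<in> tangent_space Q q \<and> (\<forall>\<Delta>\<in>tangent_space Q q. \<Delta> \<bullet> Phi e = dder V q \<Delta> e \<bullet> ph)" for e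
    using theI'[OF PhiEx[of e]] unfolding Phi_def dtransp_def by (simp add: tr1)
  have PhiU: "\<And>e x. x \<in> tangent_space Q q \<Longrightarrow> (\<forall>\<Delta>\<in>tangent_space Q q. \<Delta> \<bullet> x = dder V q \<Delta> e \<bullet> ph) \<Longrightarrow> Phi e = x"
  proof -
    fix e x assume "x \<in> tangent_space Q q" "\<forall>\<Delta>\<in>tangent_space Q q. \<Delta> \<bullet> x = dder V q \<Delta> e \<bullet> ph"
    then show "Phi e = x" using PhiEx[of e] PhiP[of e] by (simp add: tr1) blast
  qed
  have Phi_add: "\<And>a b. Phi (a + b) = Phi a + Phi b"
  proof -
    fix a b
    show "Phi (a + b) = Phi a + Phi b"
      by (rule PhiU) (use PhiP[of a] PhiP[of b] subT in \<open>auto simp: subspace_add inner_add_right blinfun.add_right inner_add_left\<close>)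
  qed
  have Phi_scale: "\<And>c a. Phi (c *\<^sub>R a) = c *\<^sub>R Phi a"
  proof -
    fix c a
    show "Phi (c *\<^sub>R a) = c *\<^sub>R Phi a"
      by (rule PhiU) (use PhiP[of a] subT in \<open>auto simp: subspace_scale blinfun.scaleR_right\<close>)
  qed
  define B where "B = Bmap Q H V q ph"
  have Bdef: "\<And>e. B e = - transp (H q) (Phi e) + transp (dder H q e) ph"
    unfolding B_def Bmap_def Phi_def by simp
  have B_add: "\<And>a b. B (a + b) = B a + B b"
    by (simp add: Bdef Phi_add tr_add dHadd tr_addA tr_neg algebra_simps)
  have B_scale: "\<And>c a. B (c *\<^sub>R a) = c *\<^sub>R B a"
    by (simp add: Bdef Phi_scale tr_scale dHscale tr_scaleA tr_neg algebra_simps)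
  have vert_eq: "vert_Hstar Q H V q ph = (\<lambda>\<epsilon>. (\<epsilon>, B \<epsilon>)) ` range (blinfun_apply (V q))"
    unfolding vert_Hstar_def B_def by auto
  have memT: "\<And>a b. (a, b) \<in> tangent_Hstar Q H q ph \<longleftrightarrow> a \<in> tangent_space Q q \<and> b = transp (H q) b + transp (dder H q a) ph"
    by (simp add: tangent_Hstar_def)
  have memH: "\<And>a b. (a, b) \<in> horiz_Hstar H q ph \<longleftrightarrow> a \<in> range (H q) \<and> b = transp (H q) b + transp (dder H q a) ph"
    by (simp add: horiz_Hstar_def)
  have hq0: "\<And>e. e \<in> range (V q) \<Longrightarrow> H q e = 0" using hv[OF q] by auto
  have ve: "\<And>e. e \<in> range (V q) \<Longrightarrow> V q e = e" using vv[OF q] by auto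
  have eqV: "\<And>e. e \<in> range (V q) \<Longrightarrow> transp (H q) (B e) + transp (dder H q e) ph = B e"
  proof -
    fix e assume e: "e \<in> range (V q)"
    have eT: "e \<in> tangent_space Q q" using e vT by auto
    have "transp (H q) (B e) = - transp (H q) (Phi e)"
      by (simp add: Bdef tr_add tr_diff tr_neg THH K1[OF eT])
    then show "transp (H q) (B e) + transp (dder H q e) ph = B e" by (simp add: Bdef)
  qed
  have C3: "vert_Hstar Q H V q ph \<subseteq> tangent_Hstar Q H q ph"
  proof
    fix z assume "z \<in> vert_Hstar Q H V q ph"
    then obtain e where e: "e \<in> range (V q)" and z: "z = (e, B e)" unfolding vert_eq by blast
    show "z \<in> tangent_Hstar Q H q ph" unfolding z memT using e vT eqV[OF e] by auto
  qed
  have C4: "horiz_Hstar H q ph \<subseteq> tangent_Hstar Q H q ph"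
    using hT by (auto simp: horiz_Hstar_def tangent_Hstar_def)
  have C1: "subspace (vert_Hstar Q H V q ph)"
    unfolding vert_eq
  proof (rule linear_subspace_image)
    show "linear (\<lambda>\<epsilon>. (\<epsilon>, B \<epsilon>))" by (rule linearI) (simp_all add: B_add B_scale)
    show "subspace (range (blinfun_apply (V q)))"
      by (rule linear_subspace_image) (simp_all add: blinfun.bounded_linear_right bounded_linear.linear)
  qed
  have C2: "subspace (horiz_Hstar H q ph)"
    unfolding subspace_def
  proof (intro conjI ballI allI)
    show "0 \<in> horiz_Hstar H q ph"
      unfolding zero_prod_def memH by (simp add: tr_zero dH0 tr_zeroA) (metis blinfun.zero_right rangeI)
  next
    fix x y assume x: "x \<in> horiz_Hstar H q ph" and y: "y \<in> horiz_Hstar H q ph"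
    obtain a1 b1 where x1: "x = (a1, b1)" by fastforce
    obtain a2 b2 where y1: "y = (a2, b2)" by fastforce
    have A1: "a1 \<in> range (H q)" and E1: "transp (H q) b1 + transp (dder H q a1) ph = b1"
      using x unfolding x1 memH by auto
    have A2: "a2 \<in> range (H q)" and E2: "transp (H q) b2 + transp (dder H q a2) ph = b2"
      using y unfolding y1 memH by auto
    have "a1 + a2 \<in> range (H q)"
    proof -
      obtain u1 u2 where "a1 = H q u1" "a2 = H q u2" using A1 A2 by blast
      then have "a1 + a2 = H q (u1 + u2)" by (simp add: blinfun.add_right)
      then show ?thesis by blast
    qed
    moreover have "transp (H q) (b1 + b2) + transp (dder H q (a1 + a2)) ph
       = (transp (H q) b1 + transp (dder H q a1) ph) + (transp (H q) b2 + transp (dder H q a2) ph)"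
      by (simp add: tr_add dHadd tr_addA algebra_simps)
    ultimately show "x + y \<in> horiz_Hstar H q ph" unfolding x1 y1 using E1 E2 by (simp add: memH)
  next
    fix c x assume x: "x \<in> horiz_Hstar H q ph"
    obtain a1 b1 where x1: "x = (a1, b1)" by fastforce
    have A1: "a1 \<in> range (H q)" and E1: "transp (H q) b1 + transp (dder H q a1) ph = b1"
      using x unfolding x1 memH by auto
    have "c *\<^sub>R a1 \<in> range (H q)"
    proof -
      obtain u1 where "a1 = H q u1" using A1 by blast
      then have "c *\<^sub>R a1 = H q (c *\<^sub>R u1)" by (simp add: blinfun.scaleR_right)
      then show ?thesis by blast
    qed
    moreover have "transp (H q) (c *\<^sub>R b1) + transp (dder H q (c *\<^sub>R a1)) ph
       = c *\<^sub>R (transp (H q) b1 + transp (dder H q a1) ph)"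
      by (simp add: tr_scale dHscale tr_scaleA algebra_simps)
    ultimately show "c *\<^sub>R x \<in> horiz_Hstar H q ph" unfolding x1 using E1 by (simp add: memH)
  qed
  have C6: "\<forall>a\<in>vert_Hstar Q H V q ph. \<forall>b\<in>tangent_Hstar Q H q ph. Omega a b = 0"
  proof (intro ballI)
    fix a b assume a: "a \<in> vert_Hstar Q H V q ph" and b: "b \<in> tangent_Hstar Q H q ph"
    then obtain e where e: "e \<in> range (V q)" and a1: "a = (e, B e)" unfolding vert_eq by blast
    obtain dq dp where b1: "b = (dq, dp)" by fastforce
    have dq: "dq \<in> tangent_space Q q" and Edp: "dp = transp (H q) dp + transp (dder H q dq) ph"
      using b unfolding b1 memT by auto
    have eT: "e \<in> tangent_space Q q" using e vT by auto
    have s1: "e \<bullet> dp = dder H q dq e \<bullet> ph"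
    proof -
      have "e \<bullet> dp = e \<bullet> (transp (H q) dp + transp (dder H q dq) ph)"
        using arg_cong[where f="\<lambda>z. e \<bullet> z", OF Edp] by simp
      also have "\<dots> = H q e \<bullet> dp + dder H q dq e \<bullet> ph" by (simp add: inner_add_right tr1)
      finally show ?thesis using hq0[OF e] by simp
    qed
    have s2: "B e \<bullet> dq = - (Phi e \<bullet> H q dq) + ph \<bullet> dder H q e dq"
      by (simp add: Bdef inner_add_left inner_diff_left tr2)
    have s3: "Phi e \<bullet> H q dq = dder V q (H q dq) e \<bullet> ph"
      using PhiP[of e] hT[of dq] inner_commute[of "Phi e" "H q dq"] by metis
    have s4: "dder V q (H q dq) e \<bullet> ph = - (dder H q (H q dq) e \<bullet> ph)"
    proof -
      have "H q (dder V q (H q dq) e) = - dder H q (H q dq) e"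
        using F3[OF hT[of dq], of e] ve[OF e] by (simp add: add_eq_0_iff)
      moreover have "dder V q (H q dq) e \<bullet> ph = ph \<bullet> H q (dder V q (H q dq) e)"
        using Ph by (simp add: inner_commute)
      ultimately show ?thesis by (simp add: inner_commute)
    qed
    have s5: "dder H q dq e = dder H q (H q dq) e + dder H q (V q dq) e"
      using Tdec[OF dq] dHadd by (metis blinfun.add_left)
    have s6: "ph \<bullet> dder H q e (H q dq) = 0"
    proof -
      have "dder H q e (H q (H q dq)) + H q (dder H q e (H q dq)) = dder H q e (H q dq)"
        by (rule F2[OF eT])
      then have "H q (dder H q e (H q dq)) = 0" using hh[OF q] by simp
      then show ?thesis using Ph[of "dder H q e (H q dq)"] by simp
    qed
    have s7: "dder H q e dq = dder H q e (H q dq) + dder H q e (V q dq)"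
      using Tdec[OF dq] by (metis blinfun.add_right)
    have s8: "ph \<bullet> dder H q (V q dq) e = ph \<bullet> dder H q e (V q dq)"
      using F4[of "V q dq" e] e Ph by (metis rangeI)
    have "Omega a b = e \<bullet> dp - B e \<bullet> dq" unfolding a1 b1 Omega_def by simp
    also have "\<dots> = 0"
      using s1 s2 s3 s4 s5 s6 s7 s8 by (simp add: inner_add_left inner_add_right inner_commute)
    finally show "Omega a b = 0" .
  qed
  have C8: "\<forall>a\<in>horiz_Hstar H q ph. (\<forall>b\<in>horiz_Hstar H q ph. Omega a b = 0) \<longrightarrow> a = 0"
  proof (intro ballI impI)
    fix a assume a: "a \<in> horiz_Hstar H q ph" and all: "\<forall>b\<in>horiz_Hstar H q ph. Omega a b = 0"
    obtain h1 p1 where a1: "a = (h1, p1)" by fastforce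
    have A1: "h1 \<in> range (H q)" and E1: "p1 = transp (H q) p1 + transp (dder H q h1) ph"
      using a unfolding a1 memH by auto
    have Hh1: "H q h1 = h1" using A1 hh[OF q] by auto
    have b1: "(0, transp (H q) h1) \<in> horiz_Hstar H q ph"
      unfolding memH by (simp add: THH dH0 tr_zeroA) (metis blinfun.zero_right rangeI)
    have "Omega a (0, transp (H q) h1) = h1 \<bullet> h1"
      unfolding a1 Omega_def by (simp add: tr1 Hh1)
    then have "h1 \<bullet> h1 = 0" using all b1 by simp
    then have h10: "h1 = 0" by simp
    have b2: "(H q p1, transp (dder H q (H q p1)) ph) \<in> horiz_Hstar H q ph"
      unfolding memH using K1[OF hT[of p1]] by simp
    have "Omega a (H q p1, transp (dder H q (H q p1)) ph) = - (p1 \<bullet> H q p1)"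
      unfolding a1 Omega_def by (simp add: h10)
    then have pHp: "p1 \<bullet> H q p1 = 0" using all b2 by simp
    have "p1 = transp (H q) p1" using E1 h10 by (simp add: dH0 tr_zeroA)
    then have "p1 \<bullet> p1 = transp (H q) p1 \<bullet> p1" by simp
    also have "\<dots> = 0" using pHp by (simp add: tr2)
    finally have "p1 = 0" by simp
    then show "a = 0" unfolding a1 using h10 by (simp add: zero_prod_def)
  qed
  have C5: "\<forall>z\<in>tangent_Hstar Q H q ph. \<exists>!ab. fst ab \<in> vert_Hstar Q H V q ph
              \<and> snd ab \<in> horiz_Hstar H q ph \<and> z = fst ab + snd ab"
  proof
    fix z assume z: "z \<in> tangent_Hstar Q H q ph"
    obtain dq dp where z1: "z = (dq, dp)" by fastforce
    have dq: "dq \<in> tangent_space Q q" and Edp: "transp (H q) dp + transp (dder H q dq) ph = dp"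
      using z unfolding z1 memT by auto
    define e where "e = V q dq"
    have e: "e \<in> range (V q)" unfolding e_def by simp
    define ab where "ab = ((e, B e), (H q dq, dp - B e))"
    show "\<exists>!ab. fst ab \<in> vert_Hstar Q H V q ph \<and> snd ab \<in> horiz_Hstar H q ph \<and> z = fst ab + snd ab"
    proof (rule ex1I[where a=ab])
      have "transp (H q) (dp - B e) + transp (dder H q (H q dq)) ph
         = (transp (H q) dp + transp (dder H q dq) ph) - (transp (H q) (B e) + transp (dder H q e) ph)"
      proof -
        have "dder H q dq = dder H q (H q dq) + dder H q e" using Tdec[OF dq] dHadd unfolding e_def by metis
        then show ?thesis by (simp add: tr_diff tr_addA algebra_simps)
      qed
      also have "\<dots> = dp - B e" using Edp eqV[OF e] by simp
      finally have hz: "(H q dq, dp - B e) \<in> horiz_Hstar H q ph" unfolding memH by simp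
      show "fst ab \<in> vert_Hstar Q H V q ph \<and> snd ab \<in> horiz_Hstar H q ph \<and> z = fst ab + snd ab"
        unfolding ab_def vert_eq using hz e Tdec[OF dq] unfolding z1 e_def
        by (auto simp: add.commute)
    next
      fix ab' assume ab': "fst ab' \<in> vert_Hstar Q H V q ph \<and> snd ab' \<in> horiz_Hstar H q ph \<and> z = fst ab' + snd ab'"
      obtain e' where e': "e' \<in> range (V q)" and f': "fst ab' = (e', B e')"
        using ab' unfolding vert_eq by blast
      obtain h' p' where s': "snd ab' = (h', p')" by fastforce
      have h': "h' \<in> range (H q)" using ab' s' memH by auto
      have sum: "dq = e' + h'" "dp = B e' + p'" using ab' f' s' z1 by auto
      have "V q dq = V q e' + V q h'" using sum by (simp add: blinfun.add_right)
      also have "\<dots> = e'" using ve[OF e'] h' vh[OF q] by auto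
      finally have ee: "e' = e" unfolding e_def by simp
      have "H q dq = H q e' + H q h'" using sum by (simp add: blinfun.add_right)
      also have "\<dots> = h'" using hq0[OF e'] h' hh[OF q] by auto
      finally have hh': "h' = H q dq" by simp
      have pp': "p' = dp - B e" using sum ee by simp
      show "ab' = ab" unfolding ab_def using f' s' ee hh' pp' by (metis prod.collapse)
    qed
  qed
  have C7: "vert_Hstar Q H V q ph =
           {a\<in>tangent_Hstar Q H q ph. \<forall>b\<in>tangent_Hstar Q H q ph. Omega a b = 0}"
  proof
    show "vert_Hstar Q H V q ph \<subseteq> {a\<in>tangent_Hstar Q H q ph. \<forall>b\<in>tangent_Hstar Q H q ph. Omega a b = 0}"
      using C3 C6 by blast
    show "{a\<in>tangent_Hstar Q H q ph. \<forall>b\<in>tangent_Hstar Q H q ph. Omega a b = 0} \<subseteq> vert_Hstar Q H V q ph"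
    proof
      fix a assume a: "a \<in> {a\<in>tangent_Hstar Q H q ph. \<forall>b\<in>tangent_Hstar Q H q ph. Omega a b = 0}"
      then obtain ab where ab: "fst ab \<in> vert_Hstar Q H V q ph" "snd ab \<in> horiz_Hstar H q ph" "a = fst ab + snd ab"
        using C5 by blast
      have "\<forall>b\<in>horiz_Hstar H q ph. Omega (snd ab) b = 0"
      proof
        fix b assume b: "b \<in> horiz_Hstar H q ph"
        then have bT: "b \<in> tangent_Hstar Q H q ph" using C4 by blast
        have "Omega a b = Omega (fst ab) b + Omega (snd ab) b" using ab(3) Omega_add by simp
        then show "Omega (snd ab) b = 0" using a bT C6 ab(1) by simp
      qed
      then have "snd ab = 0" using C8 ab(2) by blast
      then show "a \<in> vert_Hstar Q H V q ph" using ab by simp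
    qed
  qed
  have C9: "bij_betw (\<lambda>\<epsilon>. (\<epsilon>, Bmap Q H V q ph \<epsilon>)) (range (blinfun_apply (V q))) (vert_Hstar Q H V q ph)"
    unfolding bij_betw_def vert_eq B_def by (auto simp: inj_on_def)
  show ?thesis using C1 C2 C3 C4 C5 C6 C7 C8 C9 by blast
qed


end
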